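(* For all real $x,y>0$ with $x/y \geqslant 10^4$, \[ \frac{1}{\sqrt{x}} \sum_{k \leqslant x/y} \frac{\mu^2(k)}{\sqrt{k}} \leqslant \frac{12}{ \pi^2 \sqrt{y}}+\frac{0.17 \log (x/y)}{\sqrt{x}}. \]
   Context: $\mu$ is the Möbius function, so $\mu^2(k)$ is the indicator of squarefree positive integers $k$. The sum runs over positive integers $k\leqslant x/y$. *)

theory Defs
  imports "HOL-Analysis.Analysis" "HOL-Computational_Algebra.Squarefree"
begin

end

theory Submission
  imports Defs
begin

definition mu :: "nat \<Rightarrow> real" where
  "mu d = (if squarefree d then (-1) ^ card (prime_factors d) else 0)"

lemma pf_prod_primes:
  assumes "finite S" "\<And>p. p \<in> S \<Longrightarrow> prime (p::nat)"
  shows "prime_factors (\<Prod>S) = S"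
proof -
  have "0 \<notin> id ` S" using assms(2) by (auto dest: prime_gt_0_nat)
  hence "prime_factors (prod id S) = \<Union>((prime_factors \<circ> id) ` S)"
    by (rule prime_factors_prod[OF assms(1)])
  also have "\<dots> = S" using assms(2) by (auto simp: prime_prime_factors)
  finally show ?thesis by simp
qed

lemma sf_prod_primes:
  assumes "finite S" "\<And>p. p \<in> S \<Longrightarrow> prime (p::nat)"
  shows "squarefree (\<Prod>S)"
  using assms
  by (intro squarefree_prod_coprime) (auto intro: primes_coprime squarefree_prime)

lemma sf_eq_prod_pf:
  assumes "squarefree (d::nat)"
  shows "d = \<Prod>(prime_factors d)"
proof -
  have d0: "d \<noteq> 0"
  proof
    assume "d = 0" with assms show False by simp
  qed
  have "(\<Prod>p \<in> prime_factors d. p ^ multiplicity p d) = normalize d"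
    using d0 by (rule prod_prime_factors)
  moreover have "\<And>p. p \<in> prime_factors d \<Longrightarrow> multiplicity p d = 1"
    using assms d0 squarefree_factorial_semiring' by blast
  ultimately show ?thesis by simp
qed

lemma mu_sum:
  assumes "n > 0"
  shows "(\<Sum>d\<in>{d. d dvd n}. mu d) = (if n = 1 then 1 else 0)"
proof -
  define P where "P = prime_factors n"
  have finP: "finite P" unfolding P_def by simp
  have primeP: "\<And>p. p \<in> P \<Longrightarrow> prime p" unfolding P_def by auto
  have fin: "finite {d. d dvd n}" using assms by simp
  have "(\<Sum>d\<in>{d. d dvd n}. mu d) = (\<Sum>d\<in>{d. d dvd n \<and> squarefree d}. mu d)"
    by (rule sum.mono_neutral_right[OF fin]) (auto simp: mu_def)
  also have "\<dots> = (\<Sum>S\<in>Pow P. mu (\<Prod>S))"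
  proof (rule sum.reindex_bij_betw[symmetric], rule bij_betw_imageI)
    show "inj_on Prod (Pow P)"
    proof (rule inj_onI)
      fix S T assume "S \<in> Pow P" "T \<in> Pow P" "\<Prod>S = \<Prod>T"
      thus "S = T" using pf_prod_primes[of S] pf_prod_primes[of T] primeP finP
        by (metis PowD finite_subset subsetD)
    qed
    show "Prod ` Pow P = {d. d dvd n \<and> squarefree d}"
    proof (rule set_eqI, rule iffI)
      fix d assume "d \<in> Prod ` Pow P"
      then obtain S where S: "S \<subseteq> P" "d = \<Prod>S" by auto
      have finS: "finite S" using S finP finite_subset by blast
      have "(\<Prod>p\<in>S. p) dvd (\<Prod>p\<in>S. p ^ multiplicity p n)"
        by (rule prod_dvd_prod) (use S in \<open>auto simp: P_def prime_factors_multiplicity\<close>)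
      also have "\<dots> dvd (\<Prod>p\<in>P. p ^ multiplicity p n)"
        by (rule prod_dvd_prod_subset[OF finP S(1)])
      also have "\<dots> = n" unfolding P_def using assms by (simp add: prod_prime_factors)
      finally have "d dvd n" using S by simp
      moreover have "squarefree d" unfolding S(2)
        by (rule sf_prod_primes[OF finS]) (use S primeP in auto)
      ultimately show "d \<in> {d. d dvd n \<and> squarefree d}" by simp
    next
      fix d assume "d \<in> {d. d dvd n \<and> squarefree d}"
      hence d: "d dvd n" "squarefree d" by auto
      have "prime_factors d \<subseteq> P" unfolding P_def using d assms
        by (auto simp: prime_factors_dvd intro: dvd_trans)
      moreover have "d = \<Prod>(prime_factors d)" using d(2) by (rule sf_eq_prod_pf)
      ultimately show "d \<in> Prod ` Pow P" by blast
    qed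
  qed
  also have "\<dots> = (\<Sum>S\<in>Pow P. (-1) ^ card S)"
  proof (rule sum.cong[OF refl])
    fix S assume "S \<in> Pow P"
    hence "finite S" "\<And>p. p \<in> S \<Longrightarrow> prime p" using finP primeP finite_subset by auto
    thus "mu (\<Prod>S) = (-1) ^ card S"
      by (simp add: mu_def sf_prod_primes pf_prod_primes)
  qed
  also have "\<dots> = (\<Prod>p\<in>P. (1::real) - 1)"
    using prod_diff_conv_sum[OF finP, of "\<lambda>_. 1::real" "\<lambda>_. 1"] by simp
  also have "\<dots> = (if n = 1 then 1 else 0)"
  proof -
    have "P = {} \<longleftrightarrow> n = 1" unfolding P_def using assms
      using prime_factorization_empty_iff[of n] by auto
    thus ?thesis using finP by (cases "P = {}") auto
  qed
  finally show ?thesis .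
qed

lemma exch:
  fixes w :: "nat \<Rightarrow> nat" and G :: "nat \<Rightarrow> nat \<Rightarrow> real"
  assumes w: "\<And>d. d \<ge> 1 \<Longrightarrow> d \<le> w d"
  shows "(\<Sum>n=1..N. \<Sum>d\<in>{d. d \<ge> 1 \<and> w d dvd n}. G d n)
       = (\<Sum>d=1..N. \<Sum>m=1..N div w d. G d (w d * m))"
proof -
  have fin: "\<And>n. n \<ge> 1 \<Longrightarrow> finite {d. d \<ge> 1 \<and> w d dvd n}"
  proof -
    fix n :: nat assume n: "n \<ge> 1"
    have "{d. d \<ge> 1 \<and> w d dvd n} \<subseteq> {1..n}"
    proof
      fix d assume "d \<in> {d. d \<ge> 1 \<and> w d dvd n}"
      hence "d \<ge> 1" "w d dvd n" by auto
      hence "w d \<le> n" using n by (intro dvd_imp_le) auto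
      thus "d \<in> {1..n}" using w[OF \<open>d \<ge> 1\<close>] \<open>d \<ge> 1\<close> by auto
    qed
    thus "finite {d. d \<ge> 1 \<and> w d dvd n}" by (rule finite_subset) auto
  qed
  have "(\<Sum>n=1..N. \<Sum>d\<in>{d. d \<ge> 1 \<and> w d dvd n}. G d n)
      = (\<Sum>(n,d)\<in>Sigma {1..N} (\<lambda>n. {d. d \<ge> 1 \<and> w d dvd n}). G d n)"
    by (rule sum.Sigma) (auto intro!: fin[simplified])
  also have "\<dots> = (\<Sum>(d,m)\<in>Sigma {1..N} (\<lambda>d. {1..N div w d}). G d (w d * m))"
  proof (rule sum.reindex_bij_witness[where i = "\<lambda>(d,m). (w d * m, d)" and j = "\<lambda>(n,d). (d, n div w d)"])
    fix b assume "b \<in> Sigma {1..N} (\<lambda>n. {d. d \<ge> 1 \<and> w d dvd n})"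
    then obtain n d where b: "b = (n,d)" "n \<ge> 1" "n \<le> N" "d \<ge> 1" "w d dvd n" by auto
    have wd: "w d \<ge> 1" using w[OF b(4)] b(4) by simp
    have "d \<le> w d" using w b(4) by auto
    also have "w d \<le> n" using b by (intro dvd_imp_le) auto
    finally have dN: "d \<le> N" using b by simp
    have "w d \<le> n" using b by (intro dvd_imp_le) auto
    hence "n div w d \<ge> 1" using wd by (simp add: div_greater_zero_iff Suc_le_eq)
    moreover have "n div w d \<le> N div w d" using b(3) by (rule div_le_mono)
    ultimately show "(\<lambda>(n,d). (d, n div w d)) b \<in> Sigma {1..N} (\<lambda>d. {1..N div w d})"
      using b dN by auto
    show "(\<lambda>(d,m). (w d * m, d)) ((\<lambda>(n,d). (d, n div w d)) b) = b" using b by auto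
    show "(case (case b of (n, d) \<Rightarrow> (d, n div w d)) of (d, m) \<Rightarrow> G d (w d * m)) = (case b of (n, d) \<Rightarrow> G d n)"
      using b by auto
  next
    fix a assume "a \<in> Sigma {1..N} (\<lambda>d. {1..N div w d})"
    then obtain d m where a: "a = (d,m)" "d \<ge> 1" "d \<le> N" "m \<ge> 1" "m \<le> N div w d" by auto
    have wd: "w d \<ge> 1" using w[OF a(2)] a(2) by simp
    have "w d * m \<le> w d * (N div w d)" using a(5) by simp
    also have "\<dots> \<le> N" by simp
    finally have "w d * m \<le> N" .
    moreover have "w d * m \<ge> 1" using wd a(4) by simp
    ultimately show "(\<lambda>(d,m). (w d * m, d)) a \<in> Sigma {1..N} (\<lambda>n. {d. d \<ge> 1 \<and> w d dvd n})"
      using a by auto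
    show "(\<lambda>(n,d). (d, n div w d)) ((\<lambda>(d,m). (w d * m, d)) a) = a" using a wd by auto
  qed
  also have "\<dots> = (\<Sum>d=1..N. \<Sum>m=1..N div w d. G d (w d * m))"
    by (rule sum.Sigma[symmetric]) auto
  finally show ?thesis .
qed

definition Fn :: "nat \<Rightarrow> real" where "Fn n = (\<Sum>m=1..n. 1 / sqrt (real m))"
definition Pn :: "nat \<Rightarrow> real" where "Pn n = (\<Sum>m=1..n. 1 / (real m)^2)"

lemma mu_sum': "n \<ge> 1 \<Longrightarrow> (\<Sum>d\<in>{d. d \<ge> 1 \<and> d dvd n}. mu d) = (if n = 1 then 1 else 0)"
proof -
  assume n: "n \<ge> 1"
  have "{d. d \<ge> 1 \<and> d dvd n} = {d. d dvd n}" using n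
    by (auto intro: Suc_leI simp: dvd_pos_nat)
  thus ?thesis using mu_sum[of n] n by simp
qed

lemma sf_sum:
  assumes "n \<ge> (1::nat)"
  shows "(\<Sum>d\<in>{d. d \<ge> 1 \<and> d^2 dvd n}. mu d) = (if squarefree n then 1 else 0)"
proof -
  have "n \<noteq> 0" using assms by simp
  hence sp: "square_part n > 0" by (metis square_part_0_iff gr0I)
  have "{d. d \<ge> 1 \<and> d^2 dvd n} = {d. d dvd square_part n}" using sp
    by (auto simp: dvd_square_part_iff[symmetric] dvd_pos_nat Suc_leI)
  hence "(\<Sum>d\<in>{d. d \<ge> 1 \<and> d^2 dvd n}. mu d) = (if square_part n = 1 then 1 else 0)"
    using mu_sum[OF sp] by simp
  moreover have "square_part n = 1 \<longleftrightarrow> squarefree n"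
  proof
    assume "square_part n = 1"
    thus "squarefree n"
      by (intro squarefreeI) (metis dvd_square_part_iff)
  next
    assume "squarefree n"
    hence "square_part n dvd 1" using squarefreeD square_part_square_dvd by blast
    thus "square_part n = 1" by simp
  qed
  ultimately show ?thesis by simp
qed

lemma S_formula:
  "(\<Sum>k=1..N. (if squarefree k then 1 else 0) / sqrt (real k))
     = (\<Sum>d=1..N. mu d / real d * Fn (N div d^2))"
proof -
  have "(\<Sum>k=1..N. (if squarefree k then 1 else 0) / sqrt (real k))
      = (\<Sum>k=1..N. \<Sum>d\<in>{d. d \<ge> 1 \<and> d^2 dvd k}. mu d / sqrt (real k))"
  proof (rule sum.cong[OF refl])
    fix k assume "k \<in> {1..N}"
    hence k: "k \<ge> 1" by simp
    have "(\<Sum>d\<in>{d. d \<ge> 1 \<and> d^2 dvd k}. mu d / sqrt (real k)) = (\<Sum>d\<in>{d. d \<ge> 1 \<and> d^2 dvd k}. mu d) / sqrt (real k)"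
      by (simp add: sum_divide_distrib)
    thus "(if squarefree k then 1 else 0) / sqrt (real k) = (\<Sum>d\<in>{d. d \<ge> 1 \<and> d^2 dvd k}. mu d / sqrt (real k))"
      using sf_sum[OF k] by simp
  qed
  also have "\<dots> = (\<Sum>d=1..N. \<Sum>m=1..N div d^2. mu d / sqrt (real (d^2 * m)))"
    by (rule exch[where w = "\<lambda>d. d^2" and G = "\<lambda>d k. mu d / sqrt (real k)"])
       (simp add: power2_eq_square)
  also have "\<dots> = (\<Sum>d=1..N. mu d / real d * Fn (N div d^2))"
  proof (rule sum.cong[OF refl])
    fix d assume "d \<in> {1..N}"
    hence d: "d \<ge> 1" by simp
    have "(\<Sum>m=1..N div d^2. mu d / sqrt (real (d^2 * m))) = (\<Sum>m=1..N div d^2. mu d / real d * (1 / sqrt (real m)))"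
      by (rule sum.cong[OF refl]) (simp add: real_sqrt_mult)
    thus "(\<Sum>m=1..N div d^2. mu d / sqrt (real (d^2 * m))) = mu d / real d * Fn (N div d^2)"
      by (simp add: Fn_def sum_distrib_left)
  qed
  finally show ?thesis .
qed

lemma P_identity:
  assumes "K \<ge> 1"
  shows "(\<Sum>d=1..K. mu d / (real d)^2 * Pn (K div d)) = 1"
proof -
  have "(\<Sum>n=1..K. \<Sum>d\<in>{d. d \<ge> 1 \<and> id d dvd n}. mu d / (real n)^2)
      = (\<Sum>d=1..K. \<Sum>m=1..K div id d. mu d / (real (id d * m))^2)"
    by (rule exch) simp
  also have "\<dots> = (\<Sum>d=1..K. mu d / (real d)^2 * Pn (K div d))"
    by (rule sum.cong[OF refl]) (simp add: Pn_def sum_distrib_left power_mult_distrib)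
  also have "(\<Sum>n=1..K. \<Sum>d\<in>{d. d \<ge> 1 \<and> id d dvd n}. mu d / (real n)^2)
      = (\<Sum>n=1..K. (if n = 1 then 1 else 0))"
  proof (rule sum.cong[OF refl])
    fix k assume "k \<in> {1..K}"
    hence k: "k \<ge> 1" by simp
    have "(\<Sum>d\<in>{d. d \<ge> 1 \<and> id d dvd k}. mu d / (real k)^2) = (\<Sum>d\<in>{d. d \<ge> 1 \<and> d dvd k}. mu d) / (real k)^2"
      by (simp add: sum_divide_distrib)
    thus "(\<Sum>d\<in>{d. d \<ge> 1 \<and> id d dvd k}. mu d / (real k)^2) = (if k = 1 then 1 else 0)"
      using mu_sum'[OF k] by simp
  qed
  also have "\<dots> = 1" using assms by simp
  finally show ?thesis by simp
qed

lemma M_identity: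
  assumes "K \<ge> 1"
  shows "(\<Sum>d=1..K. mu d * real (K div d)) = 1"
proof -
  have "(\<Sum>n=1..K. \<Sum>d\<in>{d. d \<ge> 1 \<and> id d dvd n}. mu d)
      = (\<Sum>d=1..K. \<Sum>m=1..K div id d. mu d)"
    by (rule exch) simp
  also have "\<dots> = (\<Sum>d=1..K. mu d * real (K div d))"
    by (simp add: mult.commute)
  also have "(\<Sum>n=1..K. \<Sum>d\<in>{d. d \<ge> 1 \<and> id d dvd n}. mu d)
      = (\<Sum>n=1..K. (if n = 1 then 1 else 0))"
  proof (rule sum.cong[OF refl])
    fix k assume "k \<in> {1..K}"
    hence k: "k \<ge> 1" by simp
    thus "(\<Sum>d\<in>{d. d \<ge> 1 \<and> id d dvd k}. mu d) = (if k = 1 then 1 else 0)"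
      using mu_sum'[OF k] by simp
  qed
  also have "\<dots> = 1" using assms by simp
  finally show ?thesis by simp
qed

lemma alg1:
  fixes r q :: real
  assumes "r > 0" "q > 0" "q^2 = r^2 + 1"
  shows "1/(2*q) + 1/(2*r) \<ge> 2*(q-r)"
proof -
  have qr: "q - r = 1/(q+r)" using assms by (simp add: field_simps power2_eq_square) 
  have h: "(q+r)^2 \<ge> 4*q*r" using zero_le_square[of "q-r"] by (simp add: power2_eq_square algebra_simps)
  have "1/(2*q) + 1/(2*r) = (q+r)/(2*q*r)" using assms by (simp add: field_simps)
  also have "\<dots> \<ge> 2/(q+r)" using h assms by (simp add: field_simps power2_eq_square)
  finally show ?thesis using qr by simp
qed

lemma alg2:
  fixes r q w :: real
  assumes "r > 0" "q > 0" "w > 0" "q^2 = r^2 + 1" "w^2 = q^2 + 1"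
  shows "2*(q-r) - 1/q - 1/(2*q) + 1/(2*w) \<ge> 0"
proof -
  have qr: "q - r = 1/(q+r)" using assms by (simp add: field_simps power2_eq_square) 
  have sq: "w - q = 1/(w+q)" using assms by (simp add: field_simps power2_eq_square) 
  have rq: "r < q" using assms by (smt (verit) power2_less_imp_less)
  have qs: "q < w" using assms by (smt (verit) power2_less_imp_less)
  have e1: "2*(q-r) - 1/q = 1/(q*(q+r)^2)"
  proof -
    have "2*(q-r) - 1/q = 2/(q+r) - 1/q" using qr by simp
    also have "\<dots> = (q-r)/(q*(q+r))" using assms rq by (simp add: field_simps)
    also have "\<dots> = 1/(q*(q+r)^2)" using qr assms rq by (simp add: power2_eq_square)
    finally show ?thesis .
  qed
  have e2: "1/(2*q) - 1/(2*w) = 1/(2*q*w*(w+q))"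
  proof -
    have "1/(2*q) - 1/(2*w) = (w-q)/(2*q*w)" using assms by (simp add: field_simps)
    also have "\<dots> = 1/(2*q*w*(w+q))" using sq assms qs by simp
    finally show ?thesis .
  qed
  have "q*(q+r)^2 \<le> 2*q*w*(w+q)"
  proof -
    have "(q+r)^2 \<le> (2*q)^2" using rq assms by (intro power_mono) auto
    also have "\<dots> = 2*q*(q+q)" by (simp add: power2_eq_square)
    also have "\<dots> \<le> 2*w*(w+q)" using qs assms by (intro mult_mono add_mono) auto
    finally show ?thesis using assms by (simp add: mult.assoc)
  qed
  hence "1/(2*q*w*(w+q)) \<le> 1/(q*(q+r)^2)" using assms rq
    by (intro divide_left_mono) auto
  thus ?thesis using e1 e2 by simp
qed

lemma alg3:
  fixes m :: real assumes "m \<ge> 1"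
  shows "1/m - 1/(2*m^2) - (1/(m+1) - 1/(2*(m+1)^2)) \<le> 1/(m+1)^2"
proof -
  have m: "m > 0" "m + 1 > 0" using assms by auto
  have "1/m - 1/(2*m^2) - (1/(m+1) - 1/(2*(m+1)^2)) - 1/(m+1)^2 = -1/(2*m^2*(m+1)^2)"
    using m by (simp add: divide_simps) algebra
  moreover have "-1/(2*m^2*(m+1)^2) \<le> 0" using m by (simp add: divide_simps)
  ultimately show ?thesis by linarith
qed

lemma alg4:
  fixes m :: real assumes "m \<ge> 1"
  shows "1/(m+1)^2 \<le> 1/(m+1/2) - 1/(m+3/2)"
proof -
  have m: "m > 0" by (use assms in auto)
  have e: "(m+1)^2 - 1/4 = (m+1/2)*(m+3/2)" by (simp add: power2_eq_square field_simps)
  have "1/(m+1/2) - 1/(m+3/2) = ((m+3/2) - (m+1/2))/((m+1/2)*(m+3/2))"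
    using m by (subst diff_frac_eq) auto
  hence "1/(m+1/2) - 1/(m+3/2) = 1/((m+1)^2 - 1/4)" using e by simp
  moreover have "1/(m+1)^2 \<le> 1/((m+1)^2 - 1/4)"
  proof (rule divide_left_mono)
    have p: "(m+1)^2 - 1/4 > 0" unfolding e using m by (intro mult_pos_pos) auto
    show "0 < (m + 1)^2 * ((m + 1)^2 - 1/4)" using p m by (intro mult_pos_pos) auto
  qed auto
  ultimately show ?thesis by simp
qed

definition aa :: "nat \<Rightarrow> real" where "aa n = Fn n - 2 * sqrt (real n)"
definition cc :: "nat \<Rightarrow> real" where "cc n = aa (n+1) - 1/(2* sqrt (real n + 1))"
definition bb :: "nat \<Rightarrow> real" where "bb n = aa (n+1) - 1/(2* sqrt (real n + 2))"
definition Z :: real where "Z = lim cc"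

lemma Fn_Suc: "Fn (Suc n) = Fn n + 1 / sqrt (real (Suc n))"
  by (simp add: Fn_def)

lemma aa_Suc: "aa (Suc n) = aa n + 1 / sqrt (real n + 1) - 2 * (sqrt (real n + 1) - sqrt (real n))"
  by (simp add: aa_def Fn_Suc algebra_simps)

lemma cc_inc: "incseq cc"
proof (rule incseq_SucI)
  fix n
  define r where "r = sqrt (real n + 1)"
  define q where "q = sqrt (real n + 2)"
  have r: "r > 0" "r^2 = real n + 1" unfolding r_def by auto
  have q: "q > 0" "q^2 = r^2 + 1" unfolding q_def using r by auto
  have "cc (Suc n) - cc n = 1/(2*q) + 1/(2*r) - 2*(q-r)"
    unfolding cc_def using aa_Suc[of "Suc n"] by (simp add: r_def q_def add.commute add.left_commute)
  thus "cc n \<le> cc (Suc n)" using alg1[OF r(1) q(1) q(2)] by simp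
qed

lemma bb_dec: "decseq bb"
proof (rule decseq_SucI)
  fix n
  define r where "r = sqrt (real n + 1)"
  define q where "q = sqrt (real n + 2)"
  define w where "w = sqrt (real n + 3)"
  have r: "r > 0" "r^2 = real n + 1" unfolding r_def by auto
  have q: "q > 0" "q^2 = r^2 + 1" unfolding q_def using r by auto
  have w: "w > 0" "w^2 = q^2 + 1" unfolding w_def using q r by auto
  have "bb n - bb (Suc n) = 2*(q-r) - 1/q - 1/(2*q) + 1/(2*w)"
    unfolding bb_def using aa_Suc[of "Suc n"] by (simp add: r_def q_def w_def add.commute add.left_commute)
  thus "bb (Suc n) \<le> bb n" using alg2[OF r(1) q(1) w(1) q(2) w(2)] by simp
qed

lemma cc_le_bb: "cc n \<le> bb n"
  unfolding cc_def bb_def by (simp add: frac_le)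

lemma cc_lim: "cc \<longlonglongrightarrow> Z"
proof -
  have "\<forall>i. cc i \<le> bb 0"
  proof
    fix i
    have "bb i \<le> bb 0" using bb_dec unfolding decseq_def by blast
    thus "cc i \<le> bb 0" using cc_le_bb[of i] by linarith
  qed
  from incseq_convergent[OF cc_inc this] obtain L where "cc \<longlonglongrightarrow> L" by blast
  thus ?thesis unfolding Z_def by (simp add: limI)
qed

lemma Z_bounds:
  assumes "n \<ge> 1"
  shows "aa n - 1/(2* sqrt (real n)) \<le> Z" "Z \<le> aa n - 1/(2* sqrt (real n + 1))"
proof -
  obtain k where k: "n = k + 1" using assms by (metis add.commute le_Suc_ex)
  have "cc k \<le> Z" using incseq_le[OF cc_inc cc_lim] .
  thus "aa n - 1/(2* sqrt (real n)) \<le> Z" unfolding k cc_def by (simp add: add.commute)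
  have "\<forall>m\<ge>k. cc m \<le> bb k"
  proof (intro allI impI)
    fix m assume "m \<ge> k"
    hence "bb m \<le> bb k" using bb_dec unfolding decseq_def by blast
    thus "cc m \<le> bb k" using cc_le_bb[of m] by linarith
  qed
  hence "Z \<le> bb k" using LIMSEQ_le_const2[OF cc_lim] by blast
  thus "Z \<le> aa n - 1/(2* sqrt (real n + 1))" unfolding k bb_def by (simp add: add.commute)
qed

lemma Pn_lim: "(\<lambda>n. Pn (Suc n)) \<longlonglongrightarrow> pi^2/6"
proof -
  have "(\<lambda>n. \<Sum>i<n. 1 / (real i + 1)^2) \<longlonglongrightarrow> pi^2/6"
    using inverse_squares_sums by (simp add: sums_def add.commute)
  moreover have "Pn = (\<lambda>n. \<Sum>i<n. 1 / (real i + 1)^2)"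
  proof (rule ext)
    fix n show "Pn n = (\<Sum>i<n. 1 / (real i + 1)^2)"
      unfolding Pn_def by (induction n) (auto simp: add.commute)
  qed
  ultimately have "Pn \<longlonglongrightarrow> pi^2/6" by simp
  thus ?thesis by (rule LIMSEQ_Suc)
qed

lemma Pn_inc: "incseq Pn"
  by (rule incseq_SucI) (simp add: Pn_def)

lemma Pn_bounds:
  assumes "n \<ge> 1"
  shows "Pn n + 1/n - 1/(2*(real n)^2) \<le> pi^2/6" "pi^2/6 \<le> Pn n + 1/(real n + 1/2)"
proof -
  define T1 where "T1 m = Pn m + 1/real m - 1/(2*(real m)^2)" for m
  define T2 where "T2 m = Pn m + 1/(real m + 1/2)" for m
  have T1s: "T1 m \<le> T1 (Suc m)" if "m \<ge> 1" for m
    using alg3[of "real m"] that by (simp add: T1_def Pn_def algebra_simps)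
  have T2s: "T2 (Suc m) \<le> T2 m" if "m \<ge> 1" for m
    using alg4[of "real m"] that by (simp add: T2_def Pn_def algebra_simps)
  have T1m: "T1 n \<le> T1 m" if "m \<ge> n" for m
    using that
  proof (induction m rule: dec_induct)
    case (step m) thus ?case using T1s[of m] assms by simp
  qed simp
  have T2m: "T2 m \<le> T2 n" if "m \<ge> n" for m
    using that
  proof (induction m rule: dec_induct)
    case (step m) thus ?case using T2s[of m] assms by simp
  qed simp
  have lim2: "(\<lambda>m. pi^2/6 + inverse (real (Suc m))) \<longlonglongrightarrow> pi^2/6"
    using tendsto_add[OF tendsto_const LIMSEQ_inverse_real_of_nat, of "pi^2/6"] by simp
  have "\<forall>m\<ge>n. T1 n \<le> pi^2/6 + inverse (real (Suc m))"
  proof (intro allI impI)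
    fix m assume m: "m \<ge> n"
    have "T1 n \<le> T1 (Suc m)" using T1m m by simp
    also have "\<dots> \<le> Pn (Suc m) + 1 / real (Suc m)" by (simp add: T1_def)
    also have "Pn (Suc m) \<le> pi^2/6" using incseq_le[OF _ Pn_lim] Pn_inc
      by (simp add: incseq_Suc_iff)
    finally show "T1 n \<le> pi^2/6 + inverse (real (Suc m))" by (simp add: inverse_eq_divide)
  qed
  hence "T1 n \<le> pi^2/6" using LIMSEQ_le_const[OF lim2] by blast
  thus "Pn n + 1/n - 1/(2*(real n)^2) \<le> pi^2/6" by (simp add: T1_def)
  have "\<forall>m\<ge>n. Pn (Suc m) \<le> T2 n"
  proof (intro allI impI)
    fix m assume m: "m \<ge> n"
    have "Pn (Suc m) \<le> T2 (Suc m)" by (simp add: T2_def)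
    also have "\<dots> \<le> T2 n" using T2m m by simp
    finally show "Pn (Suc m) \<le> T2 n" .
  qed
  hence "pi^2/6 \<le> T2 n" using LIMSEQ_le_const2[OF Pn_lim] by blast
  thus "pi^2/6 \<le> Pn n + 1/(real n + 1/2)" by (simp add: T2_def)
qed

lemma h_bound:
  fixes u :: real
  assumes u: "u \<ge> 1"
  defines "n \<equiv> nat \<lfloor>u\<rfloor>"
  shows "-(17/25) \<le> (Fn n - 2 * sqrt u - Z) * sqrt u" "(Fn n - 2 * sqrt u - Z) * sqrt u \<le> 1/2"
proof -
  have n1: "n \<ge> 1" using u unfolding n_def by (simp add: le_nat_floor)
  have nu: "real n \<le> u" "u < real n + 1" using u unfolding n_def by linarith+
  define r where "r = sqrt (real n)"
  define q where "q = sqrt (real n + 1)"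
  define v where "v = sqrt u"
  have r1: "r \<ge> 1" unfolding r_def using n1 by simp
  have q2: "q^2 = r^2 + 1" unfolding q_def r_def by simp
  have qpos: "q > 0" unfolding q_def by simp
  have rs: "r \<le> v" unfolding r_def v_def using nu by simp
  have sq: "v \<le> q" unfolding v_def q_def using nu by simp
  define A where "A = aa n - Z"
  have A: "1/(2*q) \<le> A" "A \<le> 1/(2*r)" using Z_bounds[OF n1] unfolding A_def q_def r_def by linarith+
  have h: "Fn n - 2 * sqrt u - Z = A - 2*(v - r)" unfolding A_def aa_def v_def r_def by simp
  have s1: "v \<ge> 1" using rs r1 by linarith
  have "(A - 2*(v - r)) * v \<le> (1/(2*r) - 2*(v - r)) * v"
    using A s1 by (intro mult_right_mono) auto
  also have "\<dots> = 1/2 + (v - r) * (1/(2*r) - 2* v)" using r1 s1 by (simp add: field_simps)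
  also have "\<dots> \<le> 1/2"
  proof -
    have "1/(2*r) \<le> 1/2" using r1 by simp
    hence "1/(2*r) - 2* v \<le> 0" using s1 by linarith
    hence "(v - r) * (1/(2*r) - 2* v) \<le> 0" using rs by (intro mult_nonneg_nonpos) auto
    thus ?thesis by simp
  qed
  finally have "(A - 2*(v - r)) * v \<le> 1/2" .
  moreover have hh: "(Fn n - 2 * sqrt u - Z) * sqrt u = (A - 2*(v - r)) * v" by (simp only: h v_def)
  ultimately show "(Fn n - 2 * sqrt u - Z) * sqrt u \<le> 1/2" by simp
  define phi where "phi x = x/(2*q) - 2*x*(x - r)" for x
  have "(1/(2*q) - 2*(v - r)) * v \<le> (A - 2*(v - r)) * v"
    using A s1 by (intro mult_right_mono) auto
  moreover have "phi v \<ge> -(17/25)"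
  proof -
    have rq: "r < q" using q2 r1 qpos by (smt (verit) power2_less_imp_less)
    have id: "(q - r) * phi v = (q - v) * phi r + (v - r) * phi q + 2*(v-r)*(q-v)*(q-r)"
      unfolding phi_def using qpos r1 by (simp add: field_simps)
    have "r / (2*q) \<ge> 0" using r1 qpos by simp
    hence pr: "phi r \<ge> -(17/25)" unfolding phi_def by simp
    have pq: "phi q \<ge> -(17/25)"
    proof -
      have "(q - r) * (q + r) = q^2 - r^2" by (simp add: power2_eq_square algebra_simps)
      hence "(q - r) * (q + r) = 1" using q2 by simp
      hence "q * (q - r) * (q + r) = q" by (simp add: mult.assoc)
      hence e: "q * (q - r) = q / (q + r)" using r1 qpos by (simp add: field_simps)
      have "1 * 1 \<le> r * r" using r1 by (intro mult_mono) auto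
      hence "1 \<le> r^2" by (simp add: power2_eq_square)
      have "(41 * q)^2 = 1681 * q^2" by (simp add: power_mult_distrib)
      moreover have "(59 * r)^2 = 3481 * r^2" by (simp add: power_mult_distrib)
      ultimately have "(41 * q)^2 \<le> (59 * r)^2" using q2 \<open>1 \<le> r^2\<close> by linarith
      hence "41 * q \<le> 59 * r" by (rule power2_le_imp_le) (use r1 in simp)
      hence "q \<le> (59/100) * (q + r)" by simp
      hence "q / (q + r) \<le> (59/100)" using r1 qpos by (subst pos_divide_le_eq) auto
      hence w: "q*(q-r) \<le> 59/100" using e by simp
      have "phi q = 1/2 - 2*(q*(q-r))" unfolding phi_def using qpos by simp
      hence "phi q \<ge> -17/25" using w by linarith
      thus ?thesis by simp
    qed
    have "(q - v) * phi r + (v - r) * phi q \<ge> (q - v) * (-(17/25)) + (v - r) * (-(17/25))"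
      using pr pq rs sq by (intro add_mono mult_left_mono) auto
    moreover have "2*(v-r)*(q-v)*(q-r) \<ge> 0" using rs sq rq by simp
    moreover have "(q - v) * (-(17/25)) + (v - r) * (-(17/25)) = (q - r) * (-(17/25))" by (simp add: field_simps)
    ultimately have "(q - r) * phi v \<ge> (q - r) * (-(17/25))" using id by linarith
    thus ?thesis by (rule mult_left_le_imp_le) (use rq in simp)
  qed
  ultimately have "-(17/25) \<le> (A - 2*(v - r)) * v" unfolding phi_def by (simp add: algebra_simps)
  thus "-(17/25) \<le> (Fn n - 2 * sqrt u - Z) * sqrt u" unfolding hh .
qed

lemma tau_bound:
  fixes y :: real
  assumes y: "y \<ge> 1"
  defines "n \<equiv> nat \<lfloor>y\<rfloor>"
  shows "\<bar>(pi^2/6 - 1/y - Pn n) * y^2\<bar> \<le> 2/3"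
proof -
  have n1: "n \<ge> 1" using y unfolding n_def by (simp add: le_nat_floor)
  have ny: "real n \<le> y" "y < real n + 1" using y unfolding n_def by linarith+
  have B: "1/n - 1/(2*(real n)^2) \<le> pi^2/6 - Pn n" "pi^2/6 - Pn n \<le> 1/(real n + 1/2)"
    using Pn_bounds[OF n1] by linarith+
  have ypos: "y > 0" using y by simp
  have "(pi^2/6 - 1/y - Pn n) * y^2 \<le> (1/(real n + 1/2) - 1/y) * y^2"
    using B by (intro mult_right_mono) auto
  also have "\<dots> = y * (y - (real n + 1/2)) / (real n + 1/2)"
  proof -
    define a where "a = real n + 1/2"
    have "a > 0" unfolding a_def by simp
    hence "(1/a - 1/y) * y^2 = y * (y - a) / a" using ypos by (simp add: field_simps power2_eq_square)
    thus ?thesis unfolding a_def .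
  qed
  also have "\<dots> \<le> 2/3"
  proof (cases "y - (real n + 1/2) \<ge> 0")
    case True
    have "y * (y - (real n + 1/2)) \<le> (real n + 1) * (1/2)"
      using True ny by (intro mult_mono) auto
    also have "\<dots> \<le> 2/3 * (real n + 1/2)" using n1 by simp
    finally show ?thesis using n1 by (simp add: divide_simps)
  next
    case False
    hence "y * (y - (real n + 1/2)) \<le> 0" using ypos by (intro mult_nonneg_nonpos) auto
    thus ?thesis using n1 by (simp add: divide_simps)
  qed
  finally have up: "(pi^2/6 - 1/y - Pn n) * y^2 \<le> 2/3" .
  have "(1/n - 1/(2*(real n)^2) - 1/y) * y^2 \<le> (pi^2/6 - 1/y - Pn n) * y^2"
    using B by (intro mult_right_mono) auto
  moreover have "(1/n - 1/(2*(real n)^2) - 1/y) * y^2 \<ge> -1/2"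
  proof -
    define e where "e = y - real n"
    have e: "e \<ge> 0" "y = real n + e" using ny unfolding e_def by auto
    define m where "m = real n"
    have m1: "m \<ge> 1" unfolding m_def using n1 by simp
    have "(1/m - 1/(2*m^2) - 1/y) * y^2 + 1/2 = (y^2*(2*m-1) - 2*m^2*y + m^2) / (2*m^2)"
      using m1 ypos by (simp add: field_simps power2_eq_square)
    also have "y^2*(2*m-1) - 2*m^2*y + m^2 = e * (2*m*(m - 1) + e*(2*m - 1))"
      unfolding e(2) m_def[symmetric] by (simp add: power2_eq_square algebra_simps)
    finally have "(1/n - 1/(2*(real n)^2) - 1/y) * y^2 + 1/2 = e * (2*real n*(real n - 1) + e*(2*real n - 1)) / (2*(real n)^2)"
      unfolding m_def .
    moreover have "e * (2*real n*(real n - 1) + e*(2*real n - 1)) \<ge> 0"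
      using e n1 by (intro mult_nonneg_nonneg add_nonneg_nonneg) auto
    moreover have "2*(real n)^2 > 0" using n1 by simp
    ultimately have "e * (2*real n*(real n - 1) + e*(2*real n - 1)) / (2*(real n)^2) \<ge> 0"
      by (intro divide_nonneg_pos) auto
    thus ?thesis using \<open>(1/n - 1/(2*(real n)^2) - 1/y) * y^2 + 1/2 = _\<close> by linarith
  qed
  ultimately have "(pi^2/6 - 1/y - Pn n) * y^2 \<ge> -1/2" by linarith
  with up show ?thesis by simp
qed

definition sfi :: "nat \<Rightarrow> real" where "sfi d = (if squarefree d then 1 else 0)"

lemma count4: "(\<Sum>d=1..K. if 4 dvd d then 0 else (1::nat)) = K - K div 4"
proof (induction K)
  case (Suc K)
  have "Suc K div 4 = K div 4 + (if 4 dvd Suc K then 1 else 0)"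
    by (auto simp: div_Suc dvd_eq_mod_eq_0)
  moreover have "K div 4 \<le> K" by simp
  ultimately show ?case using Suc by auto
qed simp

lemma sf_not4: "squarefree (d::nat) \<Longrightarrow> \<not> 4 dvd d"
proof
  assume "squarefree d" "4 dvd d"
  hence "(2::nat)^2 dvd d" by simp
  hence "(2::nat) dvd 1" using \<open>squarefree d\<close> squarefreeD by blast
  thus False by simp
qed

lemma count_sf: "(\<Sum>d=1..K. sfi d) \<le> (3 * real K + 3) / 4"
proof -
  have "(\<Sum>d=1..K. sfi d) \<le> (\<Sum>d=1..K. real (if 4 dvd d then 0 else (1::nat)))"
    by (intro sum_mono) (auto simp: sfi_def dest: sf_not4)
  also have "\<dots> = real (K - K div 4)" by (simp only: of_nat_sum[symmetric] count4)
  also have "\<dots> = real K - real (K div 4)" by (simp add: of_nat_diff)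
  also have "\<dots> \<le> (3 * real K + 3) / 4"
  proof -
    have "K = 4 * (K div 4) + K mod 4" by simp
    moreover have "K mod 4 < 4" by simp
    ultimately have "real K \<le> 4 * real (K div 4) + 3" by linarith
    thus ?thesis by simp
  qed
  finally show ?thesis .
qed

lemma mu_abs: "\<bar>mu d\<bar> \<le> sfi d"
  by (simp add: mu_def sfi_def power_abs)

lemma M_bound:
  assumes K: "K \<ge> 1"
  shows "\<bar>\<Sum>d=1..K. mu d / real d\<bar> \<le> 1"
proof -
  define M where "M = (\<Sum>d=1..K. mu d / real d)"
  have "real K * M - 1 = (\<Sum>d=1..K. mu d * (real K / real d)) - (\<Sum>d=1..K. mu d * real (K div d))"
    unfolding M_def using M_identity[OF K] by (simp add: sum_distrib_left mult.commute)
  also have "\<dots> = (\<Sum>d=1..K. mu d * (real K / real d - real (K div d)))"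
    by (simp add: sum_subtractf right_diff_distrib)
  finally have id: "real K * M - 1 = (\<Sum>d=1..K. mu d * (real K / real d - real (K div d)))" .
  have "\<bar>\<Sum>d=1..K. mu d * (real K / real d - real (K div d))\<bar> \<le> (\<Sum>d=1..K. \<bar>mu d * (real K / real d - real (K div d))\<bar>)"
    by (rule sum_abs)
  also have "\<dots> \<le> (\<Sum>d=1..K. (if d = 1 then 0 else 1))"
  proof (rule sum_mono)
    fix d assume "d \<in> {1..K}"
    hence d: "d \<ge> 1" by simp
    have "real K = real d * real (K div d) + real (K mod d)"
      by (metis of_nat_add of_nat_mult div_mult_mod_eq mult.commute)
    hence e: "real K / real d - real (K div d) = real (K mod d) / real d" using d by (simp add: field_simps)
    have "real (K mod d) < real d" using d by simp
    hence f: "0 \<le> real (K mod d) / real d" "real (K mod d) / real d \<le> 1" using d by auto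
    have m: "\<bar>mu d\<bar> \<le> 1" using mu_abs[of d] by (simp add: sfi_def split: if_splits)
    show "\<bar>mu d * (real K / real d - real (K div d))\<bar> \<le> (if d = 1 then 0 else 1)"
    proof (cases "d = 1")
      case True thus ?thesis by simp
    next
      case False
      have "\<bar>mu d * (real K / real d - real (K div d))\<bar> = \<bar>mu d\<bar> * (real (K mod d) / real d)"
        using e f by (simp add: abs_mult)
      also have "\<dots> \<le> 1 * 1" using m f by (intro mult_mono) auto
      finally show ?thesis using False by simp
    qed
  qed
  also have "(\<Sum>d=1..K. (if d = 1 then 0 else 1::real)) = real K - 1"
  proof -
    have "(\<Sum>d=1..K. (if d = 1 then 0 else 1::real)) = (\<Sum>d\<in>{1..K} - {1}. 1)"
      by (rule sum.mono_neutral_cong_right) auto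
    also have "\<dots> = real K - 1" using K by (simp add: card_Diff_singleton of_nat_diff)
    finally show ?thesis .
  qed
  finally have "\<bar>real K * M - 1\<bar> \<le> real K - 1" using id by simp
  hence "real K * M \<le> real K * 1" "real K * (-1) \<le> real K * M" using K by (auto simp: abs_le_iff)
  moreover have Kp: "real K > 0" using K by simp
  ultimately have "M \<le> 1" "-1 \<le> M"
    using mult_le_cancel_left_pos[OF Kp, of M 1] mult_le_cancel_left_pos[OF Kp, of "-1" M] by auto
  thus ?thesis unfolding M_def by simp
qed

lemma floor_div_nat:
  assumes "t \<ge> 0" "d > 0"
  shows "nat \<lfloor>t / real d\<rfloor> = nat \<lfloor>t\<rfloor> div d"
proof -
  have "\<lfloor>t / real_of_int (int d)\<rfloor> = \<lfloor>t\<rfloor> div int d" by (rule floor_divide_real_eq_div) simp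
  hence "\<lfloor>t / real d\<rfloor> = \<lfloor>t\<rfloor> div int d" by simp
  thus ?thesis using assms by (simp add: nat_div_distrib)
qed

lemma main_core:
  fixes t :: real
  assumes t: "t \<ge> 10^4"
  shows "(\<Sum>k=1..nat \<lfloor>t\<rfloor>. (if squarefree k then 1 else 0) / sqrt (real k))
           \<le> 12 / pi^2 * sqrt t + 0.17 * ln t"
proof -
  define N where "N = nat \<lfloor>t\<rfloor>"
  define D where "D = sqrt t"
  define K where "K = nat \<lfloor>D\<rfloor>"
  define c where "c = 12 / pi^2"
  have t0: "t > 0" using t by simp
  have D100: "D \<ge> 100"
  proof -
    have "sqrt (100^2) \<le> sqrt t" using t by (intro real_sqrt_le_mono) simp
    thus ?thesis unfolding D_def by simp
  qed
  have Dpos: "D > 0" using D100 by simp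
  have D2: "D^2 = t" unfolding D_def using t0 by simp
  have KD: "real K \<le> D" "D < real K + 1" unfolding K_def using D100 by linarith+
  have K1: "K \<ge> 1" unfolding K_def using D100 by (simp add: le_nat_floor)
  have small: "N div d^2 = 0" if "d > K" for d
  proof -
    have "real d \<ge> real K + 1" using that by simp
    hence "real d > D" using KD by linarith
    hence "(real d)^2 > D^2" using Dpos by (intro power_strict_mono) auto
    hence "real (d^2) > t" using D2 by simp
    hence "d^2 > N" unfolding N_def using t0 by linarith
    thus ?thesis by simp
  qed
  define S where "S = (\<Sum>k=1..N. (if squarefree k then 1 else 0) / sqrt (real k))"
  have "S = (\<Sum>d=1..N. mu d / real d * Fn (N div d^2))" unfolding S_def by (rule S_formula)
  also have "\<dots> = (\<Sum>d=1..K. mu d / real d * Fn (N div d^2))"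
  proof (rule sum.mono_neutral_right)
    show "finite {1..N}" by simp
    show "{1..K} \<subseteq> {1..N}"
    proof -
      have "real K \<le> real K * real K" using K1 by simp
      also have "\<dots> \<le> D * D" using KD by (intro mult_mono) auto
      also have "\<dots> = t" using D2 by (simp add: power2_eq_square)
      finally have "K \<le> N" unfolding N_def by linarith
      thus ?thesis by auto
    qed
    show "\<forall>i\<in>{1..N} - {1..K}. mu i / real i * Fn (N div i^2) = 0"
      using small by (auto simp: Fn_def)
  qed
  finally have S1: "S = (\<Sum>d=1..K. mu d / real d * Fn (N div d^2))" .
  define h where "h d = Fn (N div d^2) - 2 * (D / real d) - Z" for d
  define tau where "tau d = pi^2/6 - real d / D - Pn (K div d)" for d
  have hb: "\<bar>h d\<bar> \<le> (17/25) * real d / D" if d: "d \<in> {1..K}" for d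
  proof -
    have d1: "d \<ge> 1" "real d \<le> D" using d KD by auto
    define u where "u = t / real (d^2)"
    have u1: "u \<ge> 1"
    proof -
      have "(real d)^2 \<le> D^2" using d1 by (intro power_mono) auto
      thus ?thesis unfolding u_def using D2 d1 by simp
    qed
    have nu: "nat \<lfloor>u\<rfloor> = N div d^2" unfolding u_def N_def using t0 d1 by (intro floor_div_nat) auto
    have su: "sqrt u = D / real d" unfolding u_def D_def using d1 by (simp add: real_sqrt_divide)
    have hu: "h d = Fn (nat \<lfloor>u\<rfloor>) - 2 * sqrt u - Z" unfolding h_def nu su ..
    have "\<bar>h d * (D / real d)\<bar> \<le> 17/25" using h_bound[OF u1] unfolding hu su[symmetric] by auto
    hence "\<bar>h d\<bar> * (D / real d) \<le> 17/25" using Dpos d1 by (simp add: abs_mult)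
    thus ?thesis using Dpos d1 by (simp add: field_simps)
  qed
  have tb: "\<bar>tau d\<bar> \<le> (2/3) * (real d)^2 / D^2" if d: "d \<in> {1..K}" for d
  proof -
    have d1: "d \<ge> 1" "real d \<le> D" using d KD by auto
    define y where "y = D / real d"
    have y1: "y \<ge> 1" unfolding y_def using d1 by simp
    have ny: "nat \<lfloor>y\<rfloor> = K div d" unfolding y_def K_def using Dpos d1 by (intro floor_div_nat) auto
    have ty: "tau d = pi^2/6 - 1/y - Pn (nat \<lfloor>y\<rfloor>)" by (simp only: tau_def ny) (simp add: y_def)
    have "\<bar>tau d * y^2\<bar> \<le> 2/3" using tau_bound[OF y1] unfolding ty .
    hence "\<bar>tau d\<bar> * y^2 \<le> 2/3" by (simp add: abs_mult)
    thus ?thesis unfolding y_def using Dpos d1 by (simp add: field_simps power2_eq_square)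
  qed
  define A where "A = (\<Sum>d=1..K. mu d / (real d)^2)"
  define M where "M = (\<Sum>d=1..K. mu d / real d)"
  define E1 where "E1 = (\<Sum>d=1..K. mu d / real d * h d)"
  define E2 where "E2 = (\<Sum>d=1..K. mu d / (real d)^2 * tau d)"
  define Q where "Q = (\<Sum>d=1..K. sfi d)"
  have S2: "S = 2 * D * A + Z * M + E1"
  proof -
    have "S = (\<Sum>d=1..K. 2 * D * (mu d / (real d)^2) + Z * (mu d / real d) + mu d / real d * h d)"
      unfolding S1
    proof (rule sum.cong[OF refl])
      fix d assume "d \<in> {1..K}"
      hence "real d > 0" by simp
      thus "mu d / real d * Fn (N div d^2) = 2 * D * (mu d / (real d)^2) + Z * (mu d / real d) + mu d / real d * h d"
        unfolding h_def by (simp add: field_simps power2_eq_square)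
    qed
    thus ?thesis unfolding A_def M_def E1_def by (simp add: sum.distrib sum_distrib_left)
  qed
  have one: "1 = pi^2/6 * A - M / D - E2"
  proof -
    have "1 = (\<Sum>d=1..K. mu d / (real d)^2 * Pn (K div d))" using P_identity[OF K1] by simp
    also have "\<dots> = (\<Sum>d=1..K. pi^2/6 * (mu d / (real d)^2) - (mu d / real d) / D - mu d / (real d)^2 * tau d)"
    proof (rule sum.cong[OF refl])
      fix d assume "d \<in> {1..K}"
      hence "real d > 0" by simp
      thus "mu d / (real d)^2 * Pn (K div d) = pi^2/6 * (mu d / (real d)^2) - (mu d / real d) / D - mu d / (real d)^2 * tau d"
        unfolding tau_def using Dpos by (simp add: field_simps power2_eq_square)
    qed
    also have "\<dots> = pi^2/6 * A - M / D - E2"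
      unfolding A_def M_def E2_def by (simp add: sum_subtractf sum_distrib_left sum_divide_distrib)
    finally show ?thesis .
  qed
  have S3: "S = c * D + (c + Z) * M + c * D * E2 + E1"
  proof -
    have pi0: "pi^2 > 0" by simp
    have Aeq: "A = 6/pi^2 * (1 + M / D + E2)" using one pi0 by (simp add: field_simps)
    have "2 * D * A = c * (D * (1 + M / D + E2))" unfolding Aeq c_def by (simp add: field_simps)
    also have "D * (1 + M / D + E2) = D + M + D * E2" using Dpos by (simp add: field_simps)
    finally have "2 * D * A = c * D + c * M + c * D * E2" by (simp add: algebra_simps)
    thus ?thesis unfolding S2 by (simp add: algebra_simps)
  qed
  have E1b: "\<bar>E1\<bar> \<le> (17/25) * Q / D"
  proof -
    have "\<bar>E1\<bar> \<le> (\<Sum>d=1..K. \<bar>mu d / real d * h d\<bar>)" unfolding E1_def by (rule sum_abs)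
    also have "\<dots> \<le> (\<Sum>d=1..K. sfi d * ((17/25) / D))"
    proof (rule sum_mono)
      fix d assume d: "d \<in> {1..K}"
      hence dp: "real d > 0" by simp
      have "\<bar>mu d / real d * h d\<bar> = \<bar>mu d\<bar> * (\<bar>h d\<bar> / real d)" using dp by (simp add: abs_mult)
      also have "\<dots> \<le> sfi d * ((17/25) / D)"
      proof (rule mult_mono)
        show "\<bar>h d\<bar> / real d \<le> (17/25) / D" using hb[OF d] dp by (simp add: field_simps)
        show "0 \<le> sfi d" by (simp add: sfi_def)
      qed (auto simp: mu_abs)
      finally show "\<bar>mu d / real d * h d\<bar> \<le> sfi d * ((17/25) / D)" .
    qed
    also have "\<dots> = Q * ((17/25) / D)" unfolding Q_def by (rule sum_distrib_right[symmetric])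
    also have "\<dots> = (17/25) * Q / D" by simp
    finally show ?thesis .
  qed
  have E2b: "\<bar>D * E2\<bar> \<le> (2/3) * Q / D"
  proof -
    have "\<bar>E2\<bar> \<le> (\<Sum>d=1..K. \<bar>mu d / (real d)^2 * tau d\<bar>)" unfolding E2_def by (rule sum_abs)
    also have "\<dots> \<le> (\<Sum>d=1..K. sfi d * ((2/3) / D^2))"
    proof (rule sum_mono)
      fix d assume d: "d \<in> {1..K}"
      hence dp: "real d > 0" by simp
      have "\<bar>mu d / (real d)^2 * tau d\<bar> = \<bar>mu d\<bar> * (\<bar>tau d\<bar> / (real d)^2)" using dp by (simp add: abs_mult)
      also have "\<dots> \<le> sfi d * ((2/3) / D^2)"
      proof (rule mult_mono)
        show "\<bar>tau d\<bar> / (real d)^2 \<le> (2/3) / D^2" using tb[OF d] dp Dpos by (simp add: field_simps)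
        show "0 \<le> sfi d" by (simp add: sfi_def)
      qed (auto simp: mu_abs)
      finally show "\<bar>mu d / (real d)^2 * tau d\<bar> \<le> sfi d * ((2/3) / D^2)" .
    qed
    also have "\<dots> = Q * ((2/3) / D^2)" unfolding Q_def by (rule sum_distrib_right[symmetric])
    also have "\<dots> = (2/3) * Q / D^2" by simp
    finally have "\<bar>E2\<bar> \<le> (2/3) * Q / D^2" .
    hence "D * \<bar>E2\<bar> \<le> D * ((2/3) * Q / D^2)" using Dpos by (intro mult_left_mono) auto
    thus ?thesis using Dpos by (simp add: abs_mult power2_eq_square)
  qed
  have Mb: "\<bar>M\<bar> \<le> 1" unfolding M_def by (rule M_bound[OF K1])
  have Qb: "Q \<le> (3 * D + 3) / 4"
  proof -
    have "(3 * real K + 3) / 4 \<le> (3 * D + 3) / 4" using KD by simp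
    thus ?thesis using count_sf[of K] unfolding Q_def by linarith
  qed
  have Q0: "Q \<ge> 0" unfolding Q_def by (intro sum_nonneg) (simp add: sfi_def)
  have QD: "Q / D \<le> 0.7575"
  proof -
    have "Q / D \<le> ((3 * D + 3) / 4) / D" using Qb Dpos by (intro divide_right_mono) auto
    also have "\<dots> = 3/4 + 3 / (4 * D)" using Dpos by (simp add: field_simps)
    also have "3 / (4 * D) \<le> 3 / 400" using D100 by (intro divide_left_mono) auto
    finally show ?thesis by simp
  qed
  have QD0: "Q / D \<ge> 0" using Q0 Dpos by simp
  have pib: "3.14 \<le> pi" "pi \<le> 3.15" using pi_approx by auto
  have cb: "1.2 \<le> c" "c \<le> 1.22"
  proof -
    have "3.14 * 3.14 \<le> pi * pi" by (rule mult_mono) (use pib in auto)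
    hence "pi^2 \<ge> 9.8596" by (simp add: power2_eq_square)
    thus "c \<le> 1.22" unfolding c_def by (simp add: field_simps)
    have "pi * pi \<le> 3.15 * 3.15" by (rule mult_mono) (use pib in auto)
    hence "pi^2 \<le> 9.9225" by (simp add: power2_eq_square)
    thus "1.2 \<le> c" unfolding c_def by (simp add: field_simps)
  qed
  have Zb: "-3/2 \<le> Z" "Z \<le> -1.35"
  proof -
    have a1: "aa 1 = -1" by (simp add: aa_def Fn_def)
    show "-3/2 \<le> Z" using Z_bounds(1)[of 1] a1 by simp
    have "sqrt 2 \<le> 1.42" by (rule real_le_lsqrt) (auto simp: power2_eq_square)
    hence "1/(2 * sqrt 2) \<ge> 1/(2 * 1.42)" by (intro divide_left_mono) auto
    thus "Z \<le> -1.35" using Z_bounds(2)[of 1] a1 by simp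
  qed
  have cZM: "(c + Z) * M \<le> 0.3"
  proof -
    have "\<bar>c + Z\<bar> \<le> 0.3" using cb Zb by (simp add: abs_le_iff)
    hence "\<bar>(c + Z) * M\<bar> \<le> 0.3 * 1" unfolding abs_mult using Mb by (intro mult_mono) auto
    thus ?thesis by simp
  qed
  have err: "c * (D * E2) + E1 \<le> (c * (2/3) + 17/25) * (Q / D)"
  proof -
    have "c * (D * E2) \<le> c * ((2/3) * Q / D)" using E2b cb by (intro mult_left_mono) (auto simp: abs_le_iff)
    moreover have "E1 \<le> (17/25) * Q / D" using E1b by (simp add: abs_le_iff)
    moreover have "(c * (2/3) + 17/25) * (Q / D) = c * ((2/3) * Q / D) + (17/25) * Q / D"
      by (simp add: algebra_simps)
    ultimately show ?thesis by linarith
  qed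
  have err2: "(c * (2/3) + 17/25) * (Q / D) \<le> (1.22 * (2/3) + 17/25) * 0.7575"
    using cb QD QD0 by (intro mult_mono) auto
  have lnt: "0.17 * ln t \<ge> 1.44"
  proof -
    have "(2::real)^13 \<le> t" using t by simp
    hence "ln ((2::real)^13) \<le> ln t" using t0 by (subst ln_le_cancel_iff) auto
    moreover have "ln ((2::real)^13) = 13 * ln 2" using ln_realpow[of "2::real" 13] by simp
    ultimately have "13 * ln (2::real) \<le> ln t" by simp
    thus ?thesis using ln2_ge_two_thirds by simp
  qed
  have "S = c * D + (c + Z) * M + (c * (D * E2) + E1)" using S3 by (simp add: algebra_simps)
  also have "\<dots> \<le> c * D + 0.3 + (1.22 * (2/3) + 17/25) * 0.7575" using cZM err err2 by linarith
  also have "\<dots> \<le> c * D + 0.17 * ln t" using lnt by simp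
  finally show ?thesis unfolding S_def N_def c_def D_def by simp
qed

theorem mainTheorem12:
  fixes x y :: real
  assumes "x > 0" and "y > 0" and "x / y \<ge> 10^4"
  shows "(1 / sqrt x) * (\<Sum>k\<in>{1..nat \<lfloor>x / y\<rfloor>}. (if squarefree k then 1 else 0) / sqrt (real k))
         \<le> 12 / (pi^2 * sqrt y) + 0.17 * ln (x / y) / sqrt x"
proof -
  define t where "t = x / y"
  define S where "S = (\<Sum>k\<in>{1..nat \<lfloor>t\<rfloor>}. (if squarefree k then 1 else 0) / sqrt (real k))"
  have core: "S \<le> 12 / pi^2 * sqrt t + 0.17 * ln t"
    unfolding S_def using main_core[of t] assms(3) unfolding t_def by simp
  have sx: "sqrt x > 0" using assms by simp
  have sy: "sqrt y > 0" using assms by simp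
  have st: "sqrt t = sqrt x / sqrt y" unfolding t_def by (simp add: real_sqrt_divide)
  have "(1 / sqrt x) * S \<le> (1 / sqrt x) * (12 / pi^2 * sqrt t + 0.17 * ln t)"
    using core sx by (intro mult_left_mono) auto
  also have "\<dots> = 12 / (pi^2 * sqrt y) + 0.17 * ln t / sqrt x"
    unfolding st using sx sy by (simp add: field_simps)
  finally show ?thesis unfolding S_def t_def .
qed

end
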